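(* Consider the Clipped FedSMD algorithm described in the context, and assume: (i) for every $i\in[m]$, conditionally on the past, $\mathbb E[\widehat\nabla f_i(x)\mid x]=\nabla f_i(x)$ and $\mathbb E[\|\widehat\nabla f_i(x)-\nabla f_i(x)\|^p\mid x]\le\sigma^p$ for some $\sigma>0$, $p\in(1,2]$; (ii) (separate convexity) for every $x\in\mathcal X$, all $y_1,\dots,y_m\in\mathcal X$ and all $a_1,\dots,a_m\ge0$ with $\sum_j a_j=1$, $D_\Phi(x\|\sum_j a_jy_j)\le\sum_j a_jD_\Phi(x\|y_j)$. Let $x^*\in\mathcal X$ be a minimizer of $f=\sum_{i=1}^m f_i$ over $\mathcal X$. Then for every $t\in[T]$, $$\sum_{i=1}^m\big\langle\alpha_t\widetilde\nabla_{\lambda_t}f_i(x_{i,t}),x_{i,t}-x^*\big\rangle\le\sum_{i=1}^m\big[D_\Phi(x^*\|x_{i,t})-D_\Phi(x^*\|x_{i,t+1})\big]+\frac{\alpha_t^2}{2}\sum_{i=1}^m\big\|\widetilde\nabla_{\lambda_t}f_i(x_{i,t})\big\|^2 .$$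
   Context: Setting: $m,n\in\mathbb N$, $\|\cdot\|$ is the Euclidean norm on $\mathbb R^n$, $\mathcal{X}\subset\mathbb R^n$ is a nonempty closed convex set, $f_i:\mathcal{X}\to\mathbb R$ ($i\in[m]$) are convex differentiable functions and $f=\sum_i f_i$ has a minimizer $x^*$ on $\mathcal X$. $\Phi:\mathcal{X}\to\mathbb R$ is differentiable and $1$-strongly convex, i.e. $\Phi(x)-\Phi(y)\ge\langle\nabla\Phi(y),x-y\rangle+\frac12\|x-y\|^2$, and $D_\Phi(x\|y)=\Phi(x)-\Phi(y)-\langle\nabla\Phi(y),x-y\rangle$. At a query point $x$, agent $i$ receives a random vector $\widehat\nabla f_i(x)$. For $\lambda>0$, $\widetilde\nabla_\lambda f_i(x)=\min\{1,\lambda/\|\widehat\nabla f_i(x)\|\}\,\widehat\nabla f_i(x)$. Clipped FedSMD: communication period $\mathcal P\in\mathbb N$, rounds $\mathcal T$, communication instants $\mathcal I=\{1+k\mathcal P:k=1,\dots,\mathcal T\}$, horizon $T=1+\mathcal T\mathcal P$, positive stepsizes $(\alpha_t)$, positive clipping parameters $(\lambda_t)$. Starting from $x_{i,1}\in\mathcal X$, for $t=1,\dots,T$ and each agent $i$: $y_{i,t+1}=\arg\min_{x\in\mathcal X}\{\langle\widetilde\nabla_{\lambda_t}f_i(x_{i,t}),x\rangle+\frac1{\alpha_t}D_\Phi(x\|x_{i,t})\}$; if $t+1\in\mathcal I$ then $x_{i,t+1}=\frac1m\sum_{j=1}^m y_{j,t+1}$, otherwise $x_{i,t+1}=y_{i,t+1}$.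 *)

theory Defs
  imports "HOL-Analysis.Analysis"
begin

definition bregman :: "('a::euclidean_space \<Rightarrow> real) \<Rightarrow> ('a \<Rightarrow> 'a) \<Rightarrow> 'a \<Rightarrow> 'a \<Rightarrow> real" where
  "bregman Phi gPhi x y = Phi x - Phi y - gPhi y \<bullet> (x - y)"

definition clip :: "real \<Rightarrow> 'a::euclidean_space \<Rightarrow> 'a" where
  "clip lam g = min 1 (lam / norm g) *\<^sub>R g"

end

theory Submission
  imports Defs
begin

lemma first_order:
  fixes X :: "'a::euclidean_space set"
  assumes cX: "convex X" and yX: "y \<in> X" and zX: "z \<in> X"
    and der: "(Phi has_derivative (\<lambda>h. gy \<bullet> h)) (at y within X)"
    and mn: "\<forall>w\<in>X. c \<bullet> y + Phi y \<le> c \<bullet> w + Phi w"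
  shows "0 \<le> (c + gy) \<bullet> (z - y)"
proof -
  define d where "d = z - y"
  define p where "p = (\<lambda>s::real. y + s *\<^sub>R d)"
  have pX: "p ` {0..1} \<subseteq> X"
  proof
    fix w assume "w \<in> p ` {0..1}"
    then obtain s where s: "s \<in> {0..1}" "w = p s" by auto
    have "w = (1 - s) *\<^sub>R y + s *\<^sub>R z" using s by (simp add: p_def d_def algebra_simps)
    thus "w \<in> X" using s cX yX zX by (auto intro: convexD_alt)
  qed
  have pd: "(p has_derivative (\<lambda>s. s *\<^sub>R d)) (at 0 within {0..1})"
    unfolding p_def by (auto intro!: derivative_eq_intros)
  have p0: "p 0 = y" by (simp add: p_def)
  have "((\<lambda>s. Phi (p s)) has_derivative (\<lambda>s. gy \<bullet> (s *\<^sub>R d))) (at 0 within {0..1})"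
    apply (rule has_derivative_in_compose[OF pd])
    using has_derivative_subset[OF der pX] p0 by simp
  then have lim: "((\<lambda>s. (1 / norm (s - 0)) *\<^sub>R (Phi (p s) - (Phi (p 0) + gy \<bullet> ((s - 0) *\<^sub>R d)))) \<longlongrightarrow> 0) (at_right 0)"
    unfolding has_derivative_within by (simp add: at_within_Icc_at_right)
  have ev: "eventually (\<lambda>s. - ((c + gy) \<bullet> d) \<le> (1 / norm (s - 0)) *\<^sub>R (Phi (p s) - (Phi (p 0) + gy \<bullet> ((s - 0) *\<^sub>R d)))) (at_right (0::real))"
    unfolding eventually_at_right_field
  proof (intro exI[of _ 1] conjI allI impI)
    show "(0::real) < 1" by simp
    fix s :: real assume s0: "0 < s" and s1: "s < 1"
    note s = s0 s1
    have "p s \<in> X" using pX s by auto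
    hence "c \<bullet> y + Phi y \<le> c \<bullet> p s + Phi (p s)" using mn by auto
    hence "0 \<le> s * (c \<bullet> d) + Phi (p s) - Phi y" by (simp add: p_def inner_add_right)
    hence "- (s * ((c + gy) \<bullet> d)) \<le> Phi (p s) - (Phi y + s * (gy \<bullet> d))"
      by (simp add: inner_add_left algebra_simps)
    hence "- ((c + gy) \<bullet> d) \<le> (Phi (p s) - (Phi y + s * (gy \<bullet> d))) / s"
      using s by (simp add: field_simps)
    thus "- ((c + gy) \<bullet> d) \<le> (1 / norm (s - 0)) *\<^sub>R (Phi (p s) - (Phi (p 0) + gy \<bullet> ((s - 0) *\<^sub>R d)))"
      using s p0 by simp
  qed
  have "- ((c + gy) \<bullet> d) \<le> 0"
    by (rule tendsto_lowerbound[OF lim ev]) simp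
  thus ?thesis by (simp add: d_def)
qed

theorem proposition2:
  fixes X :: "'a::euclidean_space set"
    and f :: "nat \<Rightarrow> 'a \<Rightarrow> real"
    and Phi :: "'a \<Rightarrow> real" and gPhi :: "'a \<Rightarrow> 'a"
    and m P Tc :: nat
    and alpha lam :: "nat \<Rightarrow> real"
    and ghat :: "nat \<Rightarrow> nat \<Rightarrow> 'a"
    and x y :: "nat \<Rightarrow> nat \<Rightarrow> 'a"
    and xs :: 'a and t :: nat
  assumes m_pos: "m \<ge> 1" and P_pos: "P \<ge> 1"
    and X_ne: "X \<noteq> {}" and X_closed: "closed X" and X_convex: "convex X"
    and f_convex: "\<forall>i\<in>{1..m}. convex_on X (f i)"
    and f_diff: "\<forall>i\<in>{1..m}. \<forall>z\<in>X. f i differentiable (at z within X)"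
    and Phi_grad: "\<forall>z\<in>X. (Phi has_derivative (\<lambda>h. gPhi z \<bullet> h)) (at z within X)"
    and Phi_strong: "\<forall>u\<in>X. \<forall>v\<in>X. Phi u - Phi v \<ge> gPhi v \<bullet> (u - v) + (1/2) * (norm (u - v))\<^sup>2"
    and sep_convex: "\<forall>z\<in>X. \<forall>ys a. (\<forall>j\<in>{1..m}. ys j \<in> X \<and> a j \<ge> 0) \<and> (\<Sum>j=1..m. a j) = 1 \<longrightarrow>
          bregman Phi gPhi z (\<Sum>j=1..m. a j *\<^sub>R ys j) \<le> (\<Sum>j=1..m. a j * bregman Phi gPhi z (ys j))"
    and alpha_pos: "\<forall>s. alpha s > 0" and lam_pos: "\<forall>s. lam s > 0"
    and x_init: "\<forall>i\<in>{1..m}. x i 1 \<in> X"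
    and y_mem: "\<forall>i\<in>{1..m}. \<forall>s\<in>{1..1 + Tc * P}. y i (Suc s) \<in> X"
    and y_argmin: "\<forall>i\<in>{1..m}. \<forall>s\<in>{1..1 + Tc * P}. \<forall>z\<in>X.
          clip (lam s) (ghat i s) \<bullet> y i (Suc s) + bregman Phi gPhi (y i (Suc s)) (x i s) / alpha s
          \<le> clip (lam s) (ghat i s) \<bullet> z + bregman Phi gPhi z (x i s) / alpha s"
    and x_update: "\<forall>i\<in>{1..m}. \<forall>s\<in>{1..1 + Tc * P}.
          x i (Suc s) = (if Suc s \<in> {1 + k * P | k. k \<in> {1..Tc}}
                         then (1 / real m) *\<^sub>R (\<Sum>j=1..m. y j (Suc s))
                         else y i (Suc s))"
    and xs_mem: "xs \<in> X"
    and xs_min: "\<forall>z\<in>X. (\<Sum>i=1..m. f i xs) \<le> (\<Sum>i=1..m. f i z)"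
    and t_range: "t \<in> {1..1 + Tc * P}"
  shows "(\<Sum>i=1..m. (alpha t *\<^sub>R clip (lam t) (ghat i t)) \<bullet> (x i t - xs))
         \<le> (\<Sum>i=1..m. bregman Phi gPhi xs (x i t) - bregman Phi gPhi xs (x i (Suc t)))
           + (alpha t)\<^sup>2 / 2 * (\<Sum>i=1..m. (norm (clip (lam t) (ghat i t)))\<^sup>2)"
proof -
  let ?D = "bregman Phi gPhi"
  define a where "a = alpha t"
  define g where "g = (\<lambda>i. clip (lam t) (ghat i t))"
  have apos: "a > 0" using alpha_pos by (simp add: a_def)
  have t1: "1 \<le> t" "t \<le> 1 + Tc * P" using t_range by auto
  have xX: "\<forall>i\<in>{1..m}. x i s \<in> X" if "1 \<le> s" "s \<le> 1 + Tc * P" for s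
    using that
  proof (induction s)
    case 0 then show ?case by simp
  next
    case (Suc s)
    show ?case
    proof (cases "s = 0")
      case True then show ?thesis using x_init by simp
    next
      case False
      hence sr: "s \<in> {1..1 + Tc * P}" using Suc by auto
      show ?thesis
      proof
        fix i assume i: "i \<in> {1..m}"
        have yall: "\<forall>j\<in>{1..m}. y j (Suc s) \<in> X" using y_mem sr by auto
        have avg: "(1 / real m) *\<^sub>R (\<Sum>j=1..m. y j (Suc s)) \<in> X"
        proof -
          have "(\<Sum>j=1..m. (1 / real m) *\<^sub>R y j (Suc s)) \<in> X"
            apply (rule convex_sum[OF _ X_convex])
            using m_pos yall by auto
          thus ?thesis by (simp add: scaleR_sum_right)
        qed
        show "x i (Suc s) \<in> X" using x_update i sr avg yall by auto
      qed
    qed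
  qed
  have xtX: "\<forall>i\<in>{1..m}. x i t \<in> X" using xX t1 by auto
  have per: "a * (g i \<bullet> (x i t - xs)) \<le> ?D xs (x i t) - ?D xs (y i (Suc t)) + a\<^sup>2 / 2 * (norm (g i))\<^sup>2"
    if i: "i \<in> {1..m}" for i
  proof -
    define u where "u = x i t"
    define v where "v = y i (Suc t)"
    have uX: "u \<in> X" using xtX i u_def by auto
    have vX: "v \<in> X" using y_mem i t_range v_def by auto
    have am: "\<forall>w\<in>X. (a *\<^sub>R g i - gPhi u) \<bullet> v + Phi v \<le> (a *\<^sub>R g i - gPhi u) \<bullet> w + Phi w"
    proof
      fix w assume w: "w \<in> X"
      have "g i \<bullet> v + ?D v u / a \<le> g i \<bullet> w + ?D w u / a"
        using y_argmin i t_range w by (simp add: g_def a_def u_def v_def)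
      hence "a * (g i \<bullet> v + ?D v u / a) \<le> a * (g i \<bullet> w + ?D w u / a)"
        using apos by (intro mult_left_mono) auto
      hence "a * (g i \<bullet> v) + ?D v u \<le> a * (g i \<bullet> w) + ?D w u"
        using apos by (simp add: distrib_left)
      thus "(a *\<^sub>R g i - gPhi u) \<bullet> v + Phi v \<le> (a *\<^sub>R g i - gPhi u) \<bullet> w + Phi w"
        by (simp add: bregman_def inner_diff_left inner_diff_right algebra_simps)
    qed
    have fo: "0 \<le> (a *\<^sub>R g i - gPhi u + gPhi v) \<bullet> (xs - v)"
      by (rule first_order[OF X_convex vX xs_mem _ am]) (use Phi_grad vX in auto)
    have three: "?D xs u - ?D xs v - ?D v u = (gPhi v - gPhi u) \<bullet> (xs - v)"
      by (simp add: bregman_def inner_diff_left inner_diff_right algebra_simps)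
    have sc: "?D v u \<ge> 1/2 * (norm (v - u))\<^sup>2"
    proof -
      have "Phi v - Phi u \<ge> gPhi u \<bullet> (v - u) + (1/2) * (norm (v - u))\<^sup>2"
        using Phi_strong uX vX by blast
      thus ?thesis by (simp add: bregman_def)
    qed
    have cs: "a * (g i \<bullet> (u - v)) \<le> a * (norm (g i) * norm (u - v))"
      using apos by (simp add: norm_cauchy_schwarz)
    have sq: "a * (norm (g i) * norm (u - v)) \<le> a\<^sup>2 / 2 * (norm (g i))\<^sup>2 + 1/2 * (norm (v - u))\<^sup>2"
    proof -
      have "0 \<le> (a * norm (g i) - norm (u - v))\<^sup>2" by simp
      thus ?thesis by (simp add: norm_minus_commute power2_eq_square algebra_simps)
    qed
    have "a * (g i \<bullet> (u - xs)) = a * (g i \<bullet> (u - v)) - a * (g i \<bullet> (xs - v))"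
      by (simp add: inner_diff_right algebra_simps)
    also have "a * (g i \<bullet> (xs - v)) = (a *\<^sub>R g i) \<bullet> (xs - v)" by simp
    finally have "a * (g i \<bullet> (u - xs)) \<le> a * (g i \<bullet> (u - v)) + (gPhi v - gPhi u) \<bullet> (xs - v)"
      using fo by (simp add: inner_add_left inner_diff_left algebra_simps)
    thus ?thesis using three sc cs sq by (simp add: u_def v_def)
  qed
  have comm: "(\<Sum>i=1..m. ?D xs (x i (Suc t))) \<le> (\<Sum>i=1..m. ?D xs (y i (Suc t)))"
  proof (cases "Suc t \<in> {1 + k * P | k. k \<in> {1..Tc}}")
    case True
    define av where "av = (1 / real m) *\<^sub>R (\<Sum>j=1..m. y j (Suc t))"
    have "\<forall>i\<in>{1..m}. x i (Suc t) = av" using x_update t_range True by (simp add: av_def)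
    hence "(\<Sum>i=1..m. ?D xs (x i (Suc t))) = (\<Sum>i=1..m. ?D xs av)" by simp
    also have "\<dots> = real m * ?D xs av" by simp
    also have "?D xs av \<le> (\<Sum>j=1..m. (1 / real m) * ?D xs (y j (Suc t)))"
    proof -
      have "?D xs (\<Sum>j=1..m. (1 / real m) *\<^sub>R y j (Suc t)) \<le> (\<Sum>j=1..m. (1 / real m) * ?D xs (y j (Suc t)))"
        using sep_convex[rule_format, OF xs_mem, of "\<lambda>j. y j (Suc t)" "\<lambda>j. 1 / real m"] y_mem t_range m_pos
        by auto
      thus ?thesis by (simp add: av_def scaleR_sum_right)
    qed
    hence "real m * ?D xs av \<le> real m * (\<Sum>j=1..m. (1 / real m) * ?D xs (y j (Suc t)))"
      by (simp add: mult_left_mono)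
    also have "\<dots> = (\<Sum>j=1..m. ?D xs (y j (Suc t)))"
      using m_pos by (simp add: sum_distrib_left)
    finally show ?thesis .
  next
    case False
    have "x i (Suc t) = y i (Suc t)" if i: "i \<in> {1..m}" for i
      using x_update[rule_format, OF i t_range] by (simp only: if_not_P[OF False])
    then show ?thesis by simp
  qed
  have "(\<Sum>i=1..m. (alpha t *\<^sub>R clip (lam t) (ghat i t)) \<bullet> (x i t - xs))
      = (\<Sum>i=1..m. a * (g i \<bullet> (x i t - xs)))" by (simp add: a_def g_def)
  also have "\<dots> \<le> (\<Sum>i=1..m. ?D xs (x i t) - ?D xs (y i (Suc t)) + a\<^sup>2 / 2 * (norm (g i))\<^sup>2)"
    by (rule sum_mono) (use per in auto)
  also have "\<dots> = (\<Sum>i=1..m. ?D xs (x i t)) - (\<Sum>i=1..m. ?D xs (y i (Suc t))) + a\<^sup>2 / 2 * (\<Sum>i=1..m. (norm (g i))\<^sup>2)"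
    by (simp add: sum.distrib sum_subtractf sum_distrib_left)
  also have "\<dots> \<le> (\<Sum>i=1..m. ?D xs (x i t)) - (\<Sum>i=1..m. ?D xs (x i (Suc t))) + a\<^sup>2 / 2 * (\<Sum>i=1..m. (norm (g i))\<^sup>2)"
    using comm by simp
  also have "\<dots> = (\<Sum>i=1..m. ?D xs (x i t) - ?D xs (x i (Suc t)))
           + (alpha t)\<^sup>2 / 2 * (\<Sum>i=1..m. (norm (clip (lam t) (ghat i t)))\<^sup>2)"
    by (simp add: sum_subtractf a_def g_def)
  finally show ?thesis .
qed

end
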